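(* Let $S$ be a set and let $f:2^S\to 2^S$ be monotonic with respect to $\subseteq$. Then $\nu f=\bigcup\{X\in 2^S\mid X \text{ is supported for } f\}$.
   Context: $\nu f$ denotes the greatest fixpoint of $f$ in the complete lattice $(2^S,\subseteq)$. For a binary relation ${\prec}$ on $X$ and $x\in X$, $\prec^{-1}(x)=\{x'\in X\mid x'\prec x\}$. A pair $(X,\prec)$ is a support ordering for $f$ if $X\subseteq S$, ${\prec}\subseteq X\times X$, and $x\in f(\prec^{-1}(x))$ for every $x\in X$. A set $X\subseteq S$ is supported for $f$ if there is some ${\prec}\subseteq X\times X$ such that $(X,\prec)$ is a support ordering for $f$. *)

theory Defs
  imports Main
begin

(* The ground set S is the universe of the type 'a, so 2^S is 'a set and
   \<nu> f is the library greatest fixpoint gfp f. *)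

definition pred_set :: "('a \<Rightarrow> 'a \<Rightarrow> bool) \<Rightarrow> 'a \<Rightarrow> 'a set" where
  "pred_set prec x = {x'. prec x' x}"

definition support_ordering :: "('a set \<Rightarrow> 'a set) \<Rightarrow> 'a set \<Rightarrow> ('a \<Rightarrow> 'a \<Rightarrow> bool) \<Rightarrow> bool" where
  "support_ordering f X prec \<longleftrightarrow>
     (\<forall>x y. prec x y \<longrightarrow> x \<in> X \<and> y \<in> X) \<and> (\<forall>x\<in>X. x \<in> f (pred_set prec x))"

definition supported :: "('a set \<Rightarrow> 'a set) \<Rightarrow> 'a set \<Rightarrow> bool" where
  "supported f X \<longleftrightarrow> (\<exists>prec. support_ordering f X prec)"

end

theory Submission
  imports Defs
begin

theorem corollary2:
  fixes f :: "'a set \<Rightarrow> 'a set"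
  assumes "mono f"
  shows "gfp f = \<Union> {X. supported f X}"
proof
  have "support_ordering f (gfp f) (\<lambda>x y. x \<in> gfp f \<and> y \<in> gfp f)"
  proof -
    have "\<And>x. x \<in> gfp f \<Longrightarrow> pred_set (\<lambda>x y. x \<in> gfp f \<and> y \<in> gfp f) x = gfp f"
      unfolding pred_set_def by auto
    moreover have "\<And>x. x \<in> gfp f \<Longrightarrow> x \<in> f (gfp f)"
      using gfp_unfold[OF assms] by blast
    ultimately show ?thesis unfolding support_ordering_def by auto
  qed
  then have "supported f (gfp f)" unfolding supported_def by blast
  then show "gfp f \<subseteq> \<Union> {X. supported f X}" by blast
next
  show "\<Union> {X. supported f X} \<subseteq> gfp f"
  proof (rule Sup_least)
    fix X assume "X \<in> {X. supported f X}"
    then obtain prec where p: "support_ordering f X prec" unfolding supported_def by auto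
    have "X \<subseteq> f X"
    proof
      fix x assume x: "x \<in> X"
      have "pred_set prec x \<subseteq> X" using p unfolding support_ordering_def pred_set_def by auto
      then have "f (pred_set prec x) \<subseteq> f X" using monoD[OF assms] by blast
      moreover have "x \<in> f (pred_set prec x)" using p x unfolding support_ordering_def by auto
      ultimately show "x \<in> f X" by blast
    qed
    then show "X \<subseteq> gfp f" by (rule gfp_upperbound)
  qed
qed

end
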